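(* Let $d\in(0,1]$ and $0<\rho\le d^5/(3^{40}2^5)$, and let $n$ be sufficiently large (e.g. $n\ge 30$). Let $H$ be an $n$-vertex $(\rho,d)$-cherry-dense $3$-graph. Then there is a spanning subgraph $H'$ of $H$ such that: (1) for every pair $S$ of distinct vertices, either $\deg_{H'}(S)\ge dn/3$ or $\deg_{H'}(S)=0$; moreover the number of pairs $S$ with $\deg_{H'}(S)=0$ is at most $\rho^{1/5}\binom n2$ (equivalently $|\partial H'|\ge(1-\rho^{1/5})\binom n2$ when counting unordered pairs); (2) $H'$ is $(\rho^{1/5},d)$-cherry-dense.
   Context: A $3$-graph $H$ has edges that are $3$-element subsets of $V(H)$. For a pair $S=\{x,y\}$ of distinct vertices, $\deg_H(S)=\deg_H(xy)$ is the number of edges of $H$ containing $S$. The shadow of $H$ is $\partial H=\{(x,y):\deg_H(xy)>0\}$. For $\vec G_1,\vec G_2\subseteq V(H)\times V(H)$, let $\mathcal P_2(\vec G_1,\vec G_2)=\{(x,y,z)\in V(H)^3:(x,y)\in\vec G_1,(y,z)\in\vec G_2\}$ and $e_H(\vec G_1,\vec G_2)=|\{(x,y,z)\in\mathcal P_2(\vec G_1,\vec G_2):\{x,y,z\}\in E(H)\}|$. An $n$-vertex $3$-graph $H$ is $(\rho,d)$-cherry-dense if $e_H(\vec G_1,\vec G_2)\ge d|\mathcal P_2(\vec G_1,\vec G_2)|-\rho n^3$ for all $\vec G_1,\vec G_2\subseteq V(H)\times V(H)$. A spanning subgraph $H'$ of $H$ has $V(H')=V(H)$ and $E(H')\subseteq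 E(H)$. *)

theory Defs
  imports Complex_Main
begin

definition is_3graph :: "'a set \<Rightarrow> 'a set set \<Rightarrow> bool" where
  "is_3graph V E \<longleftrightarrow> finite V \<and> (\<forall>e\<in>E. e \<subseteq> V \<and> card e = 3)"

definition deg3 :: "'a set set \<Rightarrow> 'a set \<Rightarrow> nat" where
  "deg3 E S = card {e\<in>E. S \<subseteq> e}"

definition P2 :: "'a set \<Rightarrow> ('a \<times> 'a) set \<Rightarrow> ('a \<times> 'a) set \<Rightarrow> ('a \<times> 'a \<times> 'a) set" where
  "P2 V G1 G2 = {(x,y,z). x \<in> V \<and> y \<in> V \<and> z \<in> V \<and> (x,y) \<in> G1 \<and> (y,z) \<in> G2}"

definition eH :: "'a set \<Rightarrow> 'a set set \<Rightarrow> ('a \<times> 'a) set \<Rightarrow> ('a \<times> 'a) set \<Rightarrow> nat" where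
  "eH V E G1 G2 = card {(x,y,z) \<in> P2 V G1 G2. {x,y,z} \<in> E}"

definition cherry_dense :: "'a set \<Rightarrow> 'a set set \<Rightarrow> real \<Rightarrow> real \<Rightarrow> bool" where
  "cherry_dense V E \<rho> d \<longleftrightarrow>
     (\<forall>G1 G2. G1 \<subseteq> V \<times> V \<longrightarrow> G2 \<subseteq> V \<times> V \<longrightarrow>
        real (eH V E G1 G2) \<ge> d * real (card (P2 V G1 G2)) - \<rho> * real (card V) ^ 3)"

definition pairs :: "'a set \<Rightarrow> 'a set set" where
  "pairs V = {S. S \<subseteq> V \<and> card S = 2}"

end

theory Submission
  imports Defs
begin


lemma finE: assumes "is_3graph V E" shows "finite E"
proof -
  have "E \<subseteq> Pow V" using assms by (auto simp: is_3graph_def)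
  moreover have "finite V" using assms by (simp add: is_3graph_def)
  ultimately show ?thesis by (meson finite_Pow_iff finite_subset)
qed

lemma card_P2_full: assumes "finite V" "G \<subseteq> V\<times>V"
  shows "card (P2 V G (V\<times>V)) = card G * card V"
proof -
  have "P2 V G (V\<times>V) = (\<lambda>((x,y),z). (x,y,z)) ` (G \<times> V)"
  proof (rule set_eqI)
    fix t :: "'a \<times> 'a \<times> 'a"
    obtain x y z where t: "t = (x,y,z)" by (cases t) auto
    show "t \<in> P2 V G (V\<times>V) \<longleftrightarrow> t \<in> (\<lambda>((x,y),z). (x,y,z)) ` (G \<times> V)"
    proof
      assume "t \<in> P2 V G (V\<times>V)"
      then have "((x,y),z) \<in> G \<times> V" unfolding t P2_def by simp
      then show "t \<in> (\<lambda>((x,y),z). (x,y,z)) ` (G \<times> V)" unfolding t by (rule rev_image_eqI) simp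
    next
      assume "t \<in> (\<lambda>((x,y),z). (x,y,z)) ` (G \<times> V)"
      then have "((x,y),z) \<in> G \<times> V" unfolding t by auto
      then show "t \<in> P2 V G (V\<times>V)" using assms(2) unfolding t P2_def by auto
    qed
  qed
  moreover have "inj_on (\<lambda>((x,y),z). (x,y,z)) (G\<times>V)" by (auto simp: inj_on_def)
  ultimately show ?thesis by (simp add: card_image card_cartesian_product)
qed


lemma third_le: assumes "is_3graph V E" shows "card {z\<in>V. {a,b,z}\<in>E} \<le> deg3 E {a,b}"
  unfolding deg3_def
proof (rule card_inj_on_le[where f="\<lambda>z. {a,b,z}"])
  have c3: "z \<noteq> a \<and> z \<noteq> b" if "{a,b,z}\<in>E" for z
  proof -
    have "card {a,b,z} = 3" using assms that unfolding is_3graph_def by blast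
    moreover have "card {a,b,z} \<le> 2" if "z = a \<or> z = b"
    proof -
      have "{a,b,z} = {a,b}" using that by auto
      then show ?thesis by (metis card_2_iff card_1_singleton_iff insert_absorb2 le_numeral_extra(4) card_insert_le
            numeral_le_iff one_le_numeral) 
    qed
    ultimately show ?thesis by linarith
  qed
  show "inj_on (\<lambda>z. {a,b,z}) {z\<in>V. {a,b,z}\<in>E}"
  proof (rule inj_onI)
    fix z z' assume h: "z \<in> {z\<in>V. {a,b,z}\<in>E}" "z' \<in> {z\<in>V. {a,b,z}\<in>E}" "{a,b,z} = {a,b,z'}"
    then have "z \<noteq> a" "z \<noteq> b" using c3 by auto
    moreover have "z \<in> {a,b,z'}" using h(3) by blast
    ultimately show "z = z'" by blast
  qed
  show "(\<lambda>z. {a,b,z}) ` {z\<in>V. {a,b,z}\<in>E} \<subseteq> {e\<in>E. {a,b} \<subseteq> e}" by auto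
  show "finite {e\<in>E. {a,b} \<subseteq> e}" using finE[OF assms] by simp
qed


lemma eH_full_le: assumes "is_3graph V E" "G \<subseteq> V\<times>V"
  shows "eH V E G (V\<times>V) \<le> (\<Sum>p\<in>G. deg3 E {fst p, snd p})"
proof -
  have fin: "finite V" using assms by (simp add: is_3graph_def)
  have finG: "finite G" using finite_subset[OF assms(2)] fin by simp
  have eq: "{(x,y,z) \<in> P2 V G (V\<times>V). {x,y,z}\<in>E} \<subseteq> (\<Union>p\<in>G. (\<lambda>z. (fst p, snd p, z)) ` {z\<in>V. {fst p, snd p, z}\<in>E})"
  proof
    fix t assume t: "t \<in> {(x,y,z) \<in> P2 V G (V\<times>V). {x,y,z}\<in>E}"
    obtain x y z where tt: "t = (x,y,z)" by (cases t) auto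
    have "(x,y) \<in> G" "z \<in> V" "{x,y,z}\<in>E" using t unfolding tt P2_def by auto
    then have "t \<in> (\<lambda>z. (fst (x,y), snd (x,y), z)) ` {z\<in>V. {fst (x,y), snd (x,y), z}\<in>E}"
      unfolding tt by simp
    then show "t \<in> (\<Union>p\<in>G. (\<lambda>z. (fst p, snd p, z)) ` {z\<in>V. {fst p, snd p, z}\<in>E})"
      using \<open>(x,y) \<in> G\<close> by blast
  qed
  have finU: "finite (\<Union>p\<in>G. (\<lambda>z. (fst p, snd p, z)) ` {z\<in>V. {fst p, snd p, z}\<in>E})"
    using finG fin by simp
  have "eH V E G (V\<times>V) \<le> card (\<Union>p\<in>G. (\<lambda>z. (fst p, snd p, z)) ` {z\<in>V. {fst p, snd p, z}\<in>E})"
    unfolding eH_def by (rule card_mono[OF finU eq])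
  also have "\<dots> \<le> (\<Sum>p\<in>G. card ((\<lambda>z. (fst p, snd p, z)) ` {z\<in>V. {fst p, snd p, z}\<in>E}))"
    using finG by (rule card_UN_le)
  also have "\<dots> \<le> (\<Sum>p\<in>G. deg3 E {fst p, snd p})"
  proof (rule sum_mono)
    fix p assume "p \<in> G"
    have "card ((\<lambda>z. (fst p, snd p, z)) ` {z\<in>V. {fst p, snd p, z}\<in>E}) \<le> card {z\<in>V. {fst p, snd p, z}\<in>E}"
      using fin by (intro card_image_le) simp
    also have "\<dots> \<le> deg3 E {fst p, snd p}" by (rule third_le[OF assms(1)])
    finally show "card ((\<lambda>z. (fst p, snd p, z)) ` {z\<in>V. {fst p, snd p, z}\<in>E}) \<le> deg3 E {fst p, snd p}" .
  qed
  finally show ?thesis .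
qed
lemma a1: fixes b d rho n :: real
  assumes "b*d^2 \<le> 48*rho*n" "rho * 13122^5 \<le> d^5" "0<d" "d\<le>1" "0<n" "0<rho"
  shows "b \<le> d*n/12"
proof -
  have "d^5 \<le> d^3" using assms(3,4) by (simp add: power_decreasing)
  then have "48*rho \<le> d^3/12" using assms(2,6) by simp
  then have "48*rho*n \<le> d^3/12*n" using assms(5) by (simp add: mult_right_mono)
  moreover have "(d*n/12)*d^2 = d^3/12*n" by (simp add: power2_eq_square power3_eq_cube)
  ultimately have "b*d^2 \<le> (d*n/12)*d^2" using assms(1) by linarith
  then show ?thesis using assms(3) by (simp add: mult_le_cancel_right)
qed
lemma a2: fixes b l d rho n r :: real
  assumes "b*d^2 \<le> 48*rho*n" "l*d \<le> 2*rho*n^2" "rho * 13122^4 \<le> r*d^4" "0<d" "d\<le>1" "0<n" "0<r" "0 \<le> l"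
  shows "b*n + l \<le> r*n^2/6"
proof -
  have "l*d^2 \<le> l*d" using assms by (simp add: mult_left_le power2_eq_square mult_left_mono)
  have "b*d^2*n \<le> 48*rho*n*n" using assms(1,6) by (simp add: mult_right_mono)
  then have "(b*n+l)*d^2 \<le> 50*rho*n^2" using \<open>l*d^2 \<le> l*d\<close> assms(2) by (simp add: algebra_simps power2_eq_square)
  have "d^4 \<le> d^2" using assms(4,5) by (simp add: power_decreasing)
  then have "r*d^4 \<le> r*d^2" using assms(7) by simp
  moreover have "0 \<le> r*d^2" using assms(7) by simp
  moreover have "rho * 13122^4 \<le> r*d^2" using assms(3) \<open>r*d^4 \<le> r*d^2\<close> by (rule order_trans)
  then have "rho * 29648323021629456 \<le> r*d^2" by simp
  ultimately have "50*rho \<le> r*d^2/6" by linarith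
  then have "50*rho*n^2 \<le> r*d^2/6*n^2" by (rule mult_right_mono) simp
  then have "50*rho*n^2 \<le> (r*n^2/6)*d^2" by (simp add: algebra_simps)
  then have "(b*n+l)*d^2 \<le> (r*n^2/6)*d^2" using \<open>(b*n+l)*d^2 \<le> 50*rho*n^2\<close> by linarith
  then show ?thesis using assms(4) by (simp add: mult_le_cancel_right)
qed
lemma a3: fixes b l d rho n r :: real
  assumes "b*d^2 \<le> 48*rho*n" "l*d \<le> 2*rho*n^2" "rho * 13122^4 \<le> r*d^4" "0<d" "d\<le>1" "0<n" "0<r" "0 \<le> l"
  shows "3*b*n^2 + 3*l*n + rho*n^3 \<le> r*n^3"
proof -
  have h: "b*n + l \<le> r*n^2/6" by (rule a2[OF assms(1-8)])
  have "d^4 \<le> 1" using assms(4,5) by (simp add: power_le_one)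
  then have "r*d^4 \<le> r" using assms(7) by simp
  then have "rho * 13122^4 \<le> r" using assms(3) by (rule order_trans[rotated])
  then have "rho \<le> r/2" using assms(7) by simp
  then have "rho*n^3 \<le> r/2*n^3" using assms(6) by (simp add: mult_right_mono)
  moreover have "(b*n + l)*(3*n) \<le> r*n^2/6*(3*n)" using h assms(6) by (simp add: mult_right_mono)
  ultimately show ?thesis by (simp add: algebra_simps power2_eq_square power3_eq_cube)
qed

lemma card_Un3: "card (A\<union>B\<union>C) \<le> card A + card B + card C"
proof -
  have "card (A\<union>B\<union>C) \<le> card (A\<union>B) + card C" by (rule card_Un_le)
  moreover have "card (A\<union>B) \<le> card A + card B" by (rule card_Un_le)
  ultimately show ?thesis by linarith
qed

lemma card_Un6: "card (A\<union>B\<union>C\<union>D\<union>E\<union>F) \<le> card A + card B + card C + card D + card E + card F"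
proof -
  have "card (A\<union>B\<union>C\<union>D\<union>E\<union>F) \<le> card (A\<union>B\<union>C\<union>D\<union>E) + card F" by (rule card_Un_le)
  moreover have "card (A\<union>B\<union>C\<union>D\<union>E) \<le> card (A\<union>B\<union>C\<union>D) + card E" by (rule card_Un_le)
  moreover have "card (A\<union>B\<union>C\<union>D) \<le> card (A\<union>B\<union>C) + card D" by (rule card_Un_le)
  moreover have "card (A\<union>B\<union>C) \<le> card A + card B + card C" by (rule card_Un3)
  ultimately show ?thesis by linarith
qed

theorem lemma2p2:
  fixes V :: "'a set" and E :: "'a set set" and n :: nat and d \<rho> :: real
  assumes "0 < d" and "d \<le> 1"
    and "0 < \<rho>" and "\<rho> \<le> d ^ 5 / (3 ^ 40 * 2 ^ 5)"
    and "n \<ge> 30"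
    and "is_3graph V E" and "card V = n"
    and "cherry_dense V E \<rho> d"
  shows "\<exists>E'. E' \<subseteq> E \<and>
           (\<forall>S\<in>pairs V. real (deg3 E' S) \<ge> d * real n / 3 \<or> deg3 E' S = 0) \<and>
           real (card {S\<in>pairs V. deg3 E' S = 0}) \<le> root 5 \<rho> * real (n choose 2) \<and>
           cherry_dense V E' (root 5 \<rho>) d"
proof -
  have finV: "finite V" using assms(6) by (simp add: is_3graph_def)
  have finE: "finite E" using finE[OF assms(6)] .
  have npos: "0 < real n" using assms(5) by simp
  define r where "r = root 5 \<rho>"
  have r0: "0 < r" unfolding r_def using assms(3) by simp
  have r5: "r^5 = \<rho>" unfolding r_def using assms(3) by simp
  have rhoK5: "\<rho> * 13122^5 \<le> d^5" using assms(4) by simp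
  have Kr: "13122 * r \<le> d"
  proof -
    have p1: "\<rho> = r * r^4" using r5 power_Suc[of r 4] by simp
    have "(13122 * r)^5 = 13122^5 * (r * r^4)" by (simp only: power_mult_distrib power_Suc[of r 4, symmetric]) simp
    then have "(13122 * r)^5 \<le> d^5" using rhoK5 p1 by (simp only: mult.commute)
    moreover have "0 \<le> 13122 * r" "0 \<le> d" using r0 assms(1) by auto
    moreover have "(0::nat) < 5" by simp
    ultimately show ?thesis using power_mono_iff[of "13122*r" d 5] by blast
  qed
  have rhoK4: "\<rho> * 13122^4 \<le> r * d^4"
  proof -
    have "(13122 * r)^4 \<le> d^4" using Kr r0 by (intro power_mono) auto
    then have ineq: "r * (13122 * r)^4 \<le> r * d^4" using r0 by (intro mult_left_mono) auto
    have p1: "\<rho> = r * r^4" using r5 power_Suc[of r 4] by simp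
    have p2: "(13122*r)^4 = 13122^4 * r^4" by (rule power_mult_distrib)
    have e: "\<rho> * 13122^4 = r * (13122 * r)^4" unfolding p1 p2 by (simp only: mult_ac)
    show ?thesis by (subst e) (rule ineq)
  qed
  define Lo where "Lo = {(x,y)\<in>V\<times>V. x \<noteq> y \<and> real (deg3 E {x,y}) < d * real n / 2}"
  define N where "N x = {y. (x,y)\<in>Lo}" for x
  define B where "B = {x\<in>V. real (card (N x)) \<ge> d * real n / 24}"
  define E' where "E' = {e\<in>E. (\<forall>v\<in>e. v \<notin> B) \<and> (\<forall>u\<in>e. \<forall>v\<in>e. u \<noteq> v \<longrightarrow> (u,v) \<notin> Lo)}"
  have LoV: "Lo \<subseteq> V\<times>V" unfolding Lo_def by auto
  have finLo: "finite Lo" using finite_subset[OF LoV] finV by simp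
  have Lo_sym: "\<And>x y. (x,y)\<in>Lo \<Longrightarrow> (y,x)\<in>Lo" unfolding Lo_def by (auto simp: insert_commute)
  have NV: "N x \<subseteq> V" for x unfolding N_def using LoV by auto
  have BV: "B \<subseteq> V" unfolding B_def by auto
  have finB: "finite B" using finite_subset[OF BV finV] .
  have finN: "finite (N x)" for x using finite_subset[OF NV finV] .
  have Lo_bd: "real (card Lo) * d \<le> 2 * \<rho> * real n ^ 2"
  proof -
    have cd: "real (eH V E Lo (V\<times>V)) \<ge> d * real (card (P2 V Lo (V\<times>V))) - \<rho> * real (card V)^3"
      using assms(8) LoV unfolding cherry_dense_def by blast
    have cP: "card (P2 V Lo (V\<times>V)) = card Lo * card V" by (rule card_P2_full[OF finV LoV])
    have e1: "eH V E Lo (V\<times>V) \<le> (\<Sum>p\<in>Lo. deg3 E {fst p, snd p})" by (rule eH_full_le[OF assms(6) LoV])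
    have "(\<Sum>p\<in>Lo. real (deg3 E {fst p, snd p})) \<le> (\<Sum>p\<in>Lo. d*real n/2)"
      by (rule sum_mono) (auto simp: Lo_def)
    then have "real (eH V E Lo (V\<times>V)) \<le> real (card Lo) * (d*real n/2)"
      using e1 by (simp add: of_nat_sum[symmetric] del: of_nat_sum)
    then have "real (card Lo) * d * real n \<le> 2 * \<rho> * real n ^ 2 * real n"
      using cd cP assms(7) by (simp add: power2_eq_square power3_eq_cube algebra_simps)
    then show ?thesis using npos by (simp add: mult_le_cancel_right)
  qed
  have B_bd: "real (card B) * d^2 \<le> 48 * \<rho> * real n"
  proof -
    have "Lo = Sigma V N" unfolding N_def using LoV by auto
    then have cL: "card Lo = (\<Sum>x\<in>V. card (N x))" using finV finN by (simp add: card_SigmaI)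
    have "(\<Sum>x\<in>B. d*real n/24) \<le> (\<Sum>x\<in>B. real (card (N x)))" by (rule sum_mono) (simp add: B_def)
    also have "\<dots> \<le> (\<Sum>x\<in>V. real (card (N x)))" by (rule sum_mono2[OF finV BV]) auto
    also have "\<dots> = real (card Lo)" using cL by simp
    finally have "real (card B) * (d*real n/24) \<le> real (card Lo)" by simp
    then have "real (card B) * (d*real n/24) * d \<le> real (card Lo) * d" by (rule mult_right_mono) (use assms(1) in simp)
    then have "real (card B) * d^2 * real n \<le> 48 * \<rho> * real n * real n" using Lo_bd
      by (simp add: power2_eq_square algebra_simps)
    then show ?thesis using npos by (simp add: mult_le_cancel_right)
  qed
  have B_small: "real (card B) \<le> d * real n / 12"
    by (rule a1[OF B_bd rhoK5 assms(1,2) npos assms(3)])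
  have good: "real (deg3 E' {x,y}) \<ge> d * real n / 3"
    if "x\<in>V" "y\<in>V" "x\<noteq>y" "x\<notin>B" "y\<notin>B" "(x,y)\<notin>Lo" for x y
  proof -
    have dE: "real (deg3 E {x,y}) \<ge> d*real n/2" using that unfolding Lo_def by auto
    have sub: "{e\<in>E. {x,y}\<subseteq>e} \<subseteq> {e\<in>E'. {x,y}\<subseteq>e} \<union> (\<lambda>z. {x,y,z}) ` (B \<union> N x \<union> N y)"
    proof
      fix e assume e: "e \<in> {e\<in>E. {x,y}\<subseteq>e}"
      show "e \<in> {e\<in>E'. {x,y}\<subseteq>e} \<union> (\<lambda>z. {x,y,z}) ` (B \<union> N x \<union> N y)"
      proof (cases "e\<in>E'")
        case True then show ?thesis using e by auto
      next
        case False
        have c3: "card e = 3" "e \<subseteq> V" using e assms(6) unfolding is_3graph_def by auto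
        have fe: "finite e" using finite_subset[OF c3(2) finV] .
        have "card (e - {x,y}) = 1" using c3 e \<open>x\<noteq>y\<close> fe by (simp add: card_Diff_subset)
        then obtain z where z: "e - {x,y} = {z}" using card_1_singletonE by blast
        hence ez: "e = {x,y,z}" using e by auto
        have zx: "z \<noteq> x" "z \<noteq> y" using z by auto
        have eE: "e \<in> E" using e by simp
        have "(\<exists>v\<in>e. v \<in> B) \<or> (\<exists>u\<in>e. \<exists>v\<in>e. u \<noteq> v \<and> (u,v) \<in> Lo)"
          using False eE unfolding E'_def by blast
        then have "z \<in> B \<or> (x,z)\<in>Lo \<or> (y,z)\<in>Lo"
        proof
          assume "\<exists>v\<in>e. v \<in> B" then show ?thesis using ez that(4,5) by blast
        next
          assume "\<exists>u\<in>e. \<exists>v\<in>e. u \<noteq> v \<and> (u,v) \<in> Lo"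
          then obtain u v where uv: "u\<in>{x,y,z}" "v\<in>{x,y,z}" "u\<noteq>v" "(u,v)\<in>Lo" using ez by blast
          show ?thesis using uv Lo_sym that(6) by blast
        qed
        then have "z \<in> B \<union> N x \<union> N y" unfolding N_def by blast
        then show ?thesis using ez by blast
      qed
    qed
    have finE': "finite {e\<in>E'. {x,y}\<subseteq>e}" using finE unfolding E'_def by simp
    have "deg3 E {x,y} \<le> card ({e\<in>E'. {x,y}\<subseteq>e} \<union> (\<lambda>z. {x,y,z}) ` (B \<union> N x \<union> N y))"
      unfolding deg3_def using sub finE' finB finN by (intro card_mono) auto
    also have "\<dots> \<le> deg3 E' {x,y} + card ((\<lambda>z. {x,y,z}) ` (B \<union> N x \<union> N y))"
      unfolding deg3_def by (rule card_Un_le)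
    also have "card ((\<lambda>z. {x,y,z}) ` (B \<union> N x \<union> N y)) \<le> card (B \<union> N x \<union> N y)"
      using finB finN by (intro card_image_le) auto
    also have "card (B \<union> N x \<union> N y) \<le> card B + card (N x) + card (N y)"
      by (rule card_Un3)
    finally have "real (deg3 E {x,y}) \<le> real (deg3 E' {x,y}) + real (card B) + real (card (N x)) + real (card (N y))"
      by linarith
    moreover have "real (card (N x)) < d*real n/24" "real (card (N y)) < d*real n/24"
      using that unfolding B_def by auto
    ultimately show ?thesis using dE B_small by linarith
  qed
  have bad: "deg3 E' {x,y} = 0" if "x\<in>B \<or> y\<in>B \<or> (x,y)\<in>Lo" for x y
  proof -
    have "{e\<in>E'. {x,y} \<subseteq> e} = {}"
    proof (rule ccontr)
      assume "{e\<in>E'. {x,y} \<subseteq> e} \<noteq> {}"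
      then obtain e where e: "e \<in> E'" "x \<in> e" "y \<in> e" by blast
      then have p: "\<forall>v\<in>e. v \<notin> B" "\<forall>u\<in>e. \<forall>v\<in>e. u \<noteq> v \<longrightarrow> (u,v) \<notin> Lo" unfolding E'_def by auto
      show False using that
      proof (elim disjE)
        assume "x \<in> B" then show False using p e by blast
      next
        assume "y \<in> B" then show False using p e by blast
      next
        assume "(x,y) \<in> Lo" then have "x \<noteq> y" unfolding Lo_def by blast
        then show False using p e \<open>(x,y) \<in> Lo\<close> by blast
      qed
    qed
    then show ?thesis unfolding deg3_def by (metis card.empty)
  qed
  show ?thesis
  proof (intro exI[of _ E'] conjI)
    show "E' \<subseteq> E" unfolding E'_def by auto
    show "\<forall>S\<in>pairs V. real (deg3 E' S) \<ge> d * real n / 3 \<or> deg3 E' S = 0"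
    proof
      fix S assume "S\<in>pairs V"
      then obtain x y where S: "S={x,y}" "x\<noteq>y" "x\<in>V" "y\<in>V" unfolding pairs_def by (auto simp: card_2_iff)
      show "real (deg3 E' S) \<ge> d * real n / 3 \<or> deg3 E' S = 0"
      proof (cases "x\<in>B \<or> y\<in>B \<or> (x,y)\<in>Lo")
        case True then show ?thesis using bad[OF True] S by simp
      next
        case False then show ?thesis using good S by blast
      qed
    qed
    show "real (card {S\<in>pairs V. deg3 E' S = 0}) \<le> root 5 \<rho> * real (n choose 2)"
    proof -
      let ?f = "\<lambda>(x,y). {x,y}"
      have sub: "{S\<in>pairs V. deg3 E' S = 0} \<subseteq> ?f ` (B\<times>V) \<union> ?f ` Lo"
      proof
        fix S assume S0: "S \<in> {S\<in>pairs V. deg3 E' S = 0}"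
        then obtain x y where S: "S={x,y}" "x\<noteq>y" "x\<in>V" "y\<in>V" unfolding pairs_def by (auto simp: card_2_iff)
        have "x\<in>B \<or> y\<in>B \<or> (x,y)\<in>Lo"
        proof (rule ccontr)
          assume "\<not> (x\<in>B \<or> y\<in>B \<or> (x,y)\<in>Lo)"
          then have "real (deg3 E' {x,y}) \<ge> d * real n / 3" using good S by blast
          moreover have "d * real n / 3 > 0" using assms(1) npos by simp
          ultimately show False using S0 S by simp
        qed
        moreover have "?f (x,y) = S" "?f (y,x) = S" using S by (auto simp: insert_commute)
        ultimately show "S \<in> ?f ` (B\<times>V) \<union> ?f ` Lo"
        proof (elim disjE)
          assume "x\<in>B" then have "(x,y)\<in>B\<times>V" using S by simp
          then show ?thesis using \<open>?f (x,y) = S\<close> by (metis UnI1 rev_image_eqI)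
        next
          assume "y\<in>B" then have "(y,x)\<in>B\<times>V" using S by simp
          then show ?thesis using \<open>?f (y,x) = S\<close> by (metis UnI1 rev_image_eqI)
        next
          assume "(x,y)\<in>Lo"
          then show ?thesis using \<open>?f (x,y) = S\<close> by (metis UnI2 rev_image_eqI)
        qed
      qed
      have "card {S\<in>pairs V. deg3 E' S = 0} \<le> card (?f ` (B\<times>V) \<union> ?f ` Lo)"
        using finB finV finLo by (intro card_mono[OF _ sub]) auto
      also have "\<dots> \<le> card (?f ` (B\<times>V)) + card (?f ` Lo)" by (rule card_Un_le)
      also have "\<dots> \<le> card (B\<times>V) + card Lo" using finB finV finLo by (intro add_mono card_image_le) auto
      also have "\<dots> = card B * n + card Lo" using assms(7) by (simp add: card_cartesian_product)
      finally have c0: "card {S\<in>pairs V. deg3 E' S = 0} \<le> card B * n + card Lo" .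
      then have c: "real (card {S\<in>pairs V. deg3 E' S = 0}) \<le> real (card B) * real n + real (card Lo)"
        using of_nat_mono[OF c0, where 'a=real] by simp
      have h: "real (card B) * real n + real (card Lo) \<le> r * real n^2 / 6"
        by (rule a2[OF B_bd Lo_bd rhoK4 assms(1,2) npos r0]) simp
      have ch: "real (n choose 2) = real n * (real n - 1) / 2"
        using assms(5) by (auto simp add: choose_two field_char_0_class.of_nat_div mod_eq_0_iff_dvd of_nat_diff)
      have n30: "30 \<le> real n" using assms(5) by simp
      have "30 * real n \<le> real n * real n" using mult_right_mono[OF n30, of "real n"] by simp
      then have "real n^2 / 6 \<le> real n * (real n - 1) / 2" by (simp add: power2_eq_square algebra_simps)
      then have "r * (real n^2 / 6) \<le> r * real (n choose 2)" unfolding ch using r0 by (intro mult_left_mono) auto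
      then show ?thesis using c h unfolding r_def[symmetric] by simp
    qed
    show "cherry_dense V E' (root 5 \<rho>) d"
      unfolding cherry_dense_def r_def[symmetric]
    proof (intro allI impI)
      fix G1 G2 assume G: "G1 \<subseteq> V\<times>V" "G2 \<subseteq> V\<times>V"
      have cdE: "real (eH V E G1 G2) \<ge> d * real (card (P2 V G1 G2)) - \<rho> * real (card V)^3"
        using assms(8) G unfolding cherry_dense_def by blast
      define X1 where "X1 = B\<times>V\<times>V"
      define X2 where "X2 = V\<times>B\<times>V"
      define X3 where "X3 = V\<times>V\<times>B"
      define Y1 where "Y1 = {(x,y,z). (x,y)\<in>Lo \<and> z\<in>V}"
      define Y2 where "Y2 = V\<times>Lo"
      define Y3 where "Y3 = {(x,y,z). (x,z)\<in>Lo \<and> y\<in>V}"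
      have sub: "{(x,y,z)\<in>P2 V G1 G2. {x,y,z}\<in>E} \<subseteq> {(x,y,z)\<in>P2 V G1 G2. {x,y,z}\<in>E'} \<union> (X1\<union>X2\<union>X3\<union>Y1\<union>Y2\<union>Y3)"
      proof
        fix t assume t: "t \<in> {(x,y,z)\<in>P2 V G1 G2. {x,y,z}\<in>E}"
        obtain x y z where tt: "t = (x,y,z)" by (cases t) auto
        have xyz: "x\<in>V" "y\<in>V" "z\<in>V" "{x,y,z}\<in>E" using t tt unfolding P2_def by auto
        show "t \<in> {(x,y,z)\<in>P2 V G1 G2. {x,y,z}\<in>E'} \<union> (X1\<union>X2\<union>X3\<union>Y1\<union>Y2\<union>Y3)"
        proof (cases "{x,y,z}\<in>E'")
          case True
          have "t \<in> P2 V G1 G2" using t tt by simp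
          then show ?thesis using True unfolding tt by simp
        next
          case False
          then have "\<not> ((\<forall>v\<in>{x,y,z}. v\<notin>B) \<and> (\<forall>u\<in>{x,y,z}. \<forall>v\<in>{x,y,z}. u\<noteq>v \<longrightarrow> (u,v)\<notin>Lo))"
            using xyz(4) unfolding E'_def by simp
          then have "(\<exists>v\<in>{x,y,z}. v \<in> B) \<or> (\<exists>u\<in>{x,y,z}. \<exists>v\<in>{x,y,z}. u \<noteq> v \<and> (u,v)\<in>Lo)"
            by blast
          then have "x\<in>B \<or> y\<in>B \<or> z\<in>B \<or> (x,y)\<in>Lo \<or> (y,z)\<in>Lo \<or> (x,z)\<in>Lo"
          proof
            assume "\<exists>v\<in>{x,y,z}. v \<in> B" then show ?thesis by blast
          next
            assume "\<exists>u\<in>{x,y,z}. \<exists>v\<in>{x,y,z}. u \<noteq> v \<and> (u,v)\<in>Lo"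
            then obtain u v where uv: "u\<in>{x,y,z}" "v\<in>{x,y,z}" "u \<noteq> v" "(u,v)\<in>Lo" by blast
            show ?thesis using uv Lo_sym by blast
          qed
          then have "t \<in> X1\<union>X2\<union>X3\<union>Y1\<union>Y2\<union>Y3"
            unfolding tt X1_def X2_def X3_def Y1_def Y2_def Y3_def using xyz(1-3) by auto
          then show ?thesis by blast
        qed
      qed
      have Y1e: "Y1 = (\<lambda>((x,y),z). (x,y,z)) ` (Lo\<times>V)" unfolding Y1_def by force
      have Y3e: "Y3 = (\<lambda>((x,z),y). (x,y,z)) ` (Lo\<times>V)" unfolding Y3_def by force
      have cY1: "card Y1 \<le> card Lo * n" unfolding Y1e using assms(7)
        by (metis card_cartesian_product card_image_le finLo finV finite_SigmaI)
      have cY3: "card Y3 \<le> card Lo * n" unfolding Y3e using assms(7)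
        by (metis card_cartesian_product card_image_le finLo finV finite_SigmaI)
      have cY2: "card Y2 = card Lo * n" unfolding Y2_def using assms(7) by (simp add: card_cartesian_product)
      have cX: "card X1 = card B * n * n" "card X2 = card B * n * n" "card X3 = card B * n * n"
        unfolding X1_def X2_def X3_def using assms(7) by (simp_all add: card_cartesian_product)
      have fins: "finite X1" "finite X2" "finite X3" "finite Y1" "finite Y2" "finite Y3"
        unfolding Y1e Y3e X1_def X2_def X3_def Y2_def using finB finV finLo by auto
      have finA': "finite {(x,y,z)\<in>P2 V G1 G2. {x,y,z}\<in>E'}"
      proof -
        have "P2 V G1 G2 \<subseteq> V\<times>V\<times>V" unfolding P2_def by auto
        then have "{(x,y,z)\<in>P2 V G1 G2. {x,y,z}\<in>E'} \<subseteq> V\<times>V\<times>V" by auto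
        moreover have "finite (V\<times>V\<times>V)" using finV by simp
        ultimately show ?thesis by (rule finite_subset)
      qed
      have "card {(x,y,z)\<in>P2 V G1 G2. {x,y,z}\<in>E} \<le> card ({(x,y,z)\<in>P2 V G1 G2. {x,y,z}\<in>E'} \<union> (X1\<union>X2\<union>X3\<union>Y1\<union>Y2\<union>Y3))"
        using finA' fins by (intro card_mono[OF _ sub]) auto
      also have "\<dots> \<le> card {(x,y,z)\<in>P2 V G1 G2. {x,y,z}\<in>E'} + card (X1\<union>X2\<union>X3\<union>Y1\<union>Y2\<union>Y3)"
        by (rule card_Un_le)
      also have "card (X1\<union>X2\<union>X3\<union>Y1\<union>Y2\<union>Y3) \<le> card X1 + card X2 + card X3 + card Y1 + card Y2 + card Y3"
        by (rule card_Un6)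
      finally have "eH V E G1 G2 \<le> eH V E' G1 G2 + (3 * (card B * n * n) + 3 * (card Lo * n))"
        unfolding eH_def using cX cY1 cY2 cY3 by linarith
      then have "real (eH V E G1 G2) \<le> real (eH V E' G1 G2 + (3 * (card B * n * n) + 3 * (card Lo * n)))"
        by (rule of_nat_mono)
      then have "real (eH V E G1 G2) \<le> real (eH V E' G1 G2) + (3 * real (card B) * real n^2 + 3 * real (card Lo) * real n)"
        by (simp add: power2_eq_square)
      moreover have "3 * real (card B) * real n^2 + 3 * real (card Lo) * real n + \<rho> * real n^3 \<le> r * real n^3"
        by (rule a3[OF B_bd Lo_bd rhoK4 assms(1,2) npos r0]) simp
      ultimately show "real (eH V E' G1 G2) \<ge> d * real (card (P2 V G1 G2)) - r * real (card V)^3"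
        using cdE[unfolded assms(7)] unfolding assms(7) by linarith
    qed
  qed
qed

end
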